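(* Let $(M^n,g,k)$ be an initial data set with $M$ spin, and let $\psi\in\overline{\mathcal S}(M)$ be a $C^1$ solution of $$\nabla_i\psi=-\tfrac12k_{ij}e_je_0\psi-\tfrac12\mathbf ie_i\psi\quad(i=1,\dots,n).$$ Writing $N=N(\psi)$, $X=X(\psi)$, $Y=Y(\psi)$, $\omega=\omega(\psi)$, define $$\varphi=e_0\Big(N-\mathbf iY+e_0X-\tfrac12\mathbf ie_0\,\omega\Big)\psi .$$ Then $\varphi$ also satisfies $\nabla_i\varphi=-\frac12k_{ij}e_je_0\varphi-\frac12\mathbf ie_i\varphi$ for all $i$.
   Context: Spinor conventions. For a Riemannian spin manifold $(M^n,g)$, $\mathcal S$ is the complex spinor bundle with Hermitian inner product $\langle\cdot,\cdot\rangle$ (complex linear in the first slot) and spin connection $\nabla$; Clifford multiplication by tangent vectors satisfies $vw+wv=-2g(v,w)$ and vectors act skew-Hermitian. Set $\overline{\mathcal S}=\mathcal S\oplus\mathcal S$ with direct-sum inner product and connection, where a tangent vector $e_l$ and an extra element $e_0$ act by $e_l(\psi_1,\psi_2)=(e_l\psi_1,-e_l\psi_2)$, $e_0(\psi_1,\psi_2)=(\psi_2,\psi_1)$. With $\{e_i\}_{i=1}^n$ a local orthonormal frame and summation over repeated indices, for $\phi\in\overline{\mathcal S}$: $N(\phi)=|\phi|^2$, $X(\phi)=\langle e_ie_0\phi,\phi\rangle e_i$, $Y(\phi)=\langle\mathbf i e_i\phi,\phi\rangle e_i$, $\omega_{ij}(\phi)=\operatorname{Im}\langle e_ie_je_0\phi,\phi\rangle$.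 A vector field $V=V^ie_i$ acts by $V\phi=V^ie_i\phi$, and a 2-form $\omega$ acts by $\omega\phi=\sum_{i,j}\omega_{ij}e_ie_j\phi$. An initial data set $(M^n,g,k)$ is a Riemannian manifold with a symmetric 2-tensor $k$. *)

theory Defs
  imports "HOL-Analysis.Analysis"
begin

text \<open>A neighbourhood of a point of the Riemannian spin manifold M^n is
an open set U of real^'n (coordinates), carrying a local frame E i (i :: 'n) of vector
fields; the Riemannian metric g is the one for which E is orthonormal (every metric
locally arises this way).  The spinor bundle is trivialised over U with fibre complex^'m,
Clifford multiplication by E i acting by the constant matrix c i; the Levi-Civita
connection coefficients are obtained from the Koszul formula, and the spin connection is
its lift.  The doubled bundle S-bar is complex^'m \<times> complex^'m.\<close>

definition herm :: "complex ^ 'm \<Rightarrow> complex ^ 'm \<Rightarrow> complex" where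
  "herm u v = (\<Sum>a\<in>UNIV. u $ a * cnj (v $ a))"

definition herm2 :: "(complex ^ 'm) \<times> (complex ^ 'm) \<Rightarrow> (complex ^ 'm) \<times> (complex ^ 'm) \<Rightarrow> complex" where
  "herm2 x y = herm (fst x) (fst y) + herm (snd x) (snd y)"

definition csmul :: "complex \<Rightarrow> (complex ^ 'm) \<times> (complex ^ 'm) \<Rightarrow> (complex ^ 'm) \<times> (complex ^ 'm)" where
  "csmul z x = (z *s fst x, z *s snd x)"

definition clif :: "('n \<Rightarrow> complex ^ 'm ^ 'm) \<Rightarrow> 'n \<Rightarrow> (complex ^ 'm) \<times> (complex ^ 'm) \<Rightarrow> (complex ^ 'm) \<times> (complex ^ 'm)" where
  "clif c l x = (c l *v fst x, - (c l *v snd x))"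

definition ezero :: "(complex ^ 'm) \<times> (complex ^ 'm) \<Rightarrow> (complex ^ 'm) \<times> (complex ^ 'm)" where
  "ezero x = (snd x, fst x)"

definition clifford_rep :: "('n::finite \<Rightarrow> complex ^ 'm ^ 'm) \<Rightarrow> bool" where
  "clifford_rep c \<longleftrightarrow>
     (\<forall>i j. c i ** c j + c j ** c i = (if i = j then - 2 * mat 1 else 0)) \<and>
     (\<forall>i u v. herm (c i *v u) v = - herm u (c i *v v))"

definition frame_coeff :: "('n::finite \<Rightarrow> real ^ 'n \<Rightarrow> real ^ 'n) \<Rightarrow> real ^ 'n \<Rightarrow> real ^ 'n \<Rightarrow> 'n \<Rightarrow> real" where
  "frame_coeff E p v k = (matrix_inv (transpose (\<chi> i. E i p)) *v v) $ k"

definition lie_bracket :: "(real ^ 'n \<Rightarrow> real ^ 'n) \<Rightarrow> (real ^ 'n \<Rightarrow> real ^ 'n) \<Rightarrow> real ^ 'n \<Rightarrow> real ^ 'n" where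
  "lie_bracket A B p = frechet_derivative B (at p) (A p) - frechet_derivative A (at p) (B p)"

text \<open>Connection coefficients Gamma i j k = g(nabla_{E_i} E_j, E_k) of the Levi-Civita connection
of the metric making E orthonormal (Koszul formula).\<close>
definition lc_coeff :: "('n::finite \<Rightarrow> real ^ 'n \<Rightarrow> real ^ 'n) \<Rightarrow> 'n \<Rightarrow> 'n \<Rightarrow> 'n \<Rightarrow> real ^ 'n \<Rightarrow> real" where
  "lc_coeff E i j k p = (1/2) *
     (frame_coeff E p (lie_bracket (E i) (E j) p) k
      - frame_coeff E p (lie_bracket (E i) (E k) p) j
      - frame_coeff E p (lie_bracket (E j) (E k) p) i)"

definition spin_nabla :: "('n::finite \<Rightarrow> real ^ 'n \<Rightarrow> real ^ 'n) \<Rightarrow> ('n \<Rightarrow> complex ^ 'm ^ 'm)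
     \<Rightarrow> (real ^ 'n \<Rightarrow> (complex ^ 'm) \<times> (complex ^ 'm)) \<Rightarrow> 'n \<Rightarrow> real ^ 'n \<Rightarrow> (complex ^ 'm) \<times> (complex ^ 'm)" where
  "spin_nabla E c \<psi> i p = frechet_derivative \<psi> (at p) (E i p)
     + (\<Sum>j\<in>UNIV. \<Sum>k\<in>UNIV. (lc_coeff E i j k p / 4) *\<^sub>R clif c j (clif c k (\<psi> p)))"

definition killing_eq :: "('n::finite \<Rightarrow> real ^ 'n \<Rightarrow> real ^ 'n) \<Rightarrow> ('n \<Rightarrow> complex ^ 'm ^ 'm)
     \<Rightarrow> ('n \<Rightarrow> 'n \<Rightarrow> real ^ 'n \<Rightarrow> real) \<Rightarrow> (real ^ 'n \<Rightarrow> (complex ^ 'm) \<times> (complex ^ 'm)) \<Rightarrow> real ^ 'n \<Rightarrow> bool" where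
  "killing_eq E c k \<psi> p \<longleftrightarrow>
     (\<forall>i. spin_nabla E c \<psi> i p =
        - (\<Sum>j\<in>UNIV. (k i j p / 2) *\<^sub>R clif c j (ezero (\<psi> p)))
        - csmul (\<i> / 2) (clif c i (\<psi> p)))"

definition Nq :: "(complex ^ 'm) \<times> (complex ^ 'm) \<Rightarrow> real" where
  "Nq x = Re (herm2 x x)"

definition Xq :: "('n \<Rightarrow> complex ^ 'm ^ 'm) \<Rightarrow> (complex ^ 'm) \<times> (complex ^ 'm) \<Rightarrow> 'n \<Rightarrow> complex" where
  "Xq c x i = herm2 (clif c i (ezero x)) x"

definition Yq :: "('n \<Rightarrow> complex ^ 'm ^ 'm) \<Rightarrow> (complex ^ 'm) \<times> (complex ^ 'm) \<Rightarrow> 'n \<Rightarrow> complex" where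
  "Yq c x i = herm2 (csmul \<i> (clif c i x)) x"

definition omegaq :: "('n \<Rightarrow> complex ^ 'm ^ 'm) \<Rightarrow> (complex ^ 'm) \<times> (complex ^ 'm) \<Rightarrow> 'n \<Rightarrow> 'n \<Rightarrow> real" where
  "omegaq c x i j = Im (herm2 (clif c i (clif c j (ezero x))) x)"

definition vact :: "('n::finite \<Rightarrow> complex ^ 'm ^ 'm) \<Rightarrow> ('n \<Rightarrow> complex) \<Rightarrow> (complex ^ 'm) \<times> (complex ^ 'm) \<Rightarrow> (complex ^ 'm) \<times> (complex ^ 'm)" where
  "vact c V x = (\<Sum>i\<in>UNIV. csmul (V i) (clif c i x))"

definition fact2 :: "('n::finite \<Rightarrow> complex ^ 'm ^ 'm) \<Rightarrow> ('n \<Rightarrow> 'n \<Rightarrow> real) \<Rightarrow> (complex ^ 'm) \<times> (complex ^ 'm) \<Rightarrow> (complex ^ 'm) \<times> (complex ^ 'm)" where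
  "fact2 c w x = (\<Sum>i\<in>UNIV. \<Sum>j\<in>UNIV. w i j *\<^sub>R clif c i (clif c j x))"

definition phi_of :: "('n::finite \<Rightarrow> complex ^ 'm ^ 'm) \<Rightarrow> (complex ^ 'm) \<times> (complex ^ 'm) \<Rightarrow> (complex ^ 'm) \<times> (complex ^ 'm)" where
  "phi_of c x = ezero (Nq x *\<^sub>R x
      - csmul \<i> (vact c (Yq c x) x)
      + ezero (vact c (Xq c x) x)
      - csmul (\<i> / 2) (ezero (fact2 c (omegaq c x) x)))"

end

theory Submission
  imports Defs
begin


lemma csmul_add[simp]: "csmul z (x + y) = csmul z x + csmul z y"
  by (simp add: csmul_def vec_eq_iff prod_eq_iff algebra_simps)
lemma csmul_diff[simp]: "csmul z (x - y) = csmul z x - csmul z y"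
  by (simp add: csmul_def vec_eq_iff prod_eq_iff algebra_simps)
lemma csmul_minus[simp]: "csmul z (- x) = - csmul z x"
  by (simp add: csmul_def vec_eq_iff prod_eq_iff algebra_simps)
lemma csmul_zero[simp]: "csmul z 0 = 0" "csmul 0 x = 0"
  by (simp_all add: csmul_def vec_eq_iff prod_eq_iff algebra_simps)
lemma csmul_one[simp]: "csmul 1 x = x"
  by (simp_all add: csmul_def vec_eq_iff prod_eq_iff algebra_simps)
lemma csmul_csmul[simp]: "csmul z (csmul w x) = csmul (z * w) x"
  by (simp add: csmul_def vec_eq_iff prod_eq_iff algebra_simps)
lemma csmul_addl: "csmul (z + w) x = csmul z x + csmul w x"
  by (simp add: csmul_def vec_eq_iff prod_eq_iff algebra_simps)
lemma csmul_diffl: "csmul (z - w) x = csmul z x - csmul w x"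
  by (simp add: csmul_def vec_eq_iff prod_eq_iff algebra_simps)
lemma csmul_minusl: "csmul (- z) x = - csmul z x"
  by (simp add: csmul_def vec_eq_iff prod_eq_iff algebra_simps)
lemma scaleR_csmul: "r *\<^sub>R x = csmul (of_real r) x"
  by (simp add: csmul_def vec_eq_iff prod_eq_iff) (simp add: scaleR_conv_of_real)
lemma csmul_scaleR[simp]: "csmul z (r *\<^sub>R x) = csmul (of_real r * z) x"
  by (simp add: scaleR_csmul mult.commute)
lemma csmul_sum[simp]: "csmul z (sum f S) = (\<Sum>i\<in>S. csmul z (f i))"
  by (induct S rule: infinite_finite_induct) auto
lemma csmul_suml: "csmul (sum f S) x = (\<Sum>i\<in>S. csmul (f i) x)"
  by (induct S rule: infinite_finite_induct) (auto simp: csmul_addl)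

lemma mv_add: "(A::complex^'m^'m) *v (x + y) = A *v x + A *v y"
  by (simp add: matrix_vector_right_distrib)
lemma mv_smul: "(A::complex^'m^'m) *v (z *s x) = z *s (A *v x)"
  by (simp add: vec_eq_iff matrix_vector_mult_def sum_distrib_left algebra_simps)

lemma clif_add[simp]: "clif c a (x + y) = clif c a x + clif c a y"
  by (simp add: clif_def matrix_vector_right_distrib)
lemma clif_minus[simp]: "clif c a (- x) = - clif c a x"
  using matrix_vector_mult_diff_distrib[of "c a" 0 "fst x"] matrix_vector_mult_diff_distrib[of "c a" 0 "snd x"]
  by (simp add: clif_def)
lemma clif_diff[simp]: "clif c a (x - y) = clif c a x - clif c a y"
  using clif_add[of c a x "-y"] by simp
lemma clif_zero[simp]: "clif c a 0 = 0"
  using clif_add[of c a 0 0] by simp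
lemma clif_csmul[simp]: "clif c a (csmul z x) = csmul z (clif c a x)"
  by (simp add: clif_def csmul_def mv_smul)
lemma clif_scaleR[simp]: "clif c a (r *\<^sub>R x) = r *\<^sub>R clif c a x"
  by (simp add: scaleR_csmul)
lemma clif_sum[simp]: "clif c a (sum f S) = (\<Sum>i\<in>S. clif c a (f i))"
  by (induct S rule: infinite_finite_induct) auto

lemma ezero_add[simp]: "ezero (x + y) = ezero x + ezero y"
  by (simp add: ezero_def)
lemma ezero_minus[simp]: "ezero (- x) = - ezero x"
  by (simp add: ezero_def)
lemma ezero_diff[simp]: "ezero (x - y) = ezero x - ezero y"
  by (simp add: ezero_def)
lemma ezero_zero[simp]: "ezero 0 = 0"
  by (simp add: ezero_def zero_prod_def)
lemma ezero_csmul[simp]: "ezero (csmul z x) = csmul z (ezero x)"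
  by (simp add: ezero_def csmul_def)
lemma ezero_scaleR[simp]: "ezero (r *\<^sub>R x) = r *\<^sub>R ezero x"
  by (simp add: ezero_def)
lemma ezero_sum[simp]: "ezero (sum f S) = (\<Sum>i\<in>S. ezero (f i))"
  by (induct S rule: infinite_finite_induct) auto
lemma ezero_ezero[simp]: "ezero (ezero x) = x"
  by (simp add: ezero_def)
lemma ezero_clif[simp]: "ezero (clif c a x) = - clif c a (ezero x)"
  by (simp add: ezero_def clif_def)

lemma herm_addl: "herm (x + y) z = herm x z + herm y z"
  by (simp add: herm_def sum.distrib algebra_simps)
lemma herm_addr: "herm z (x + y) = herm z x + herm z y"
  by (simp add: herm_def sum.distrib algebra_simps)
lemma herm_smull: "herm (a *s x) z = a * herm x z"
  by (simp add: herm_def sum_distrib_left algebra_simps)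
lemma herm_smulr: "herm z (a *s x) = cnj a * herm z x"
  by (simp add: herm_def sum_distrib_left algebra_simps)
lemma herm_minusl: "herm (- x) z = - herm x z"
  by (simp add: herm_def sum_negf)
lemma herm_minusr: "herm z (- x) = - herm z x"
  by (simp add: herm_def sum_negf)
lemma herm_cnj: "cnj (herm x y) = herm y x"
  by (simp add: herm_def mult.commute)

lemma herm2_addl[simp]: "herm2 (x + y) z = herm2 x z + herm2 y z"
  by (simp add: herm2_def herm_addl)
lemma herm2_addr[simp]: "herm2 z (x + y) = herm2 z x + herm2 z y"
  by (simp add: herm2_def herm_addr)
lemma herm2_minusl[simp]: "herm2 (- x) z = - herm2 x z"
  by (simp add: herm2_def herm_minusl)
lemma herm2_minusr[simp]: "herm2 z (- x) = - herm2 z x"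
  by (simp add: herm2_def herm_minusr)
lemma herm2_diffl[simp]: "herm2 (x - y) z = herm2 x z - herm2 y z"
  using herm2_addl[of x "-y" z] by simp
lemma herm2_diffr[simp]: "herm2 z (x - y) = herm2 z x - herm2 z y"
  using herm2_addr[of z x "-y"] by simp
lemma herm2_zerol[simp]: "herm2 0 z = 0"
  using herm2_addl[of 0 0 z] by simp
lemma herm2_zeror[simp]: "herm2 z 0 = 0"
  using herm2_addr[of z 0 0] by simp
lemma herm2_csmull[simp]: "herm2 (csmul a x) z = a * herm2 x z"
  by (simp add: herm2_def csmul_def herm_smull algebra_simps)
lemma herm2_csmulr[simp]: "herm2 z (csmul a x) = cnj a * herm2 z x"
  by (simp add: herm2_def csmul_def herm_smulr algebra_simps)
lemma herm2_scaleRl[simp]: "herm2 (r *\<^sub>R x) z = of_real r * herm2 x z"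
  by (simp add: scaleR_csmul)
lemma herm2_scaleRr[simp]: "herm2 z (r *\<^sub>R x) = of_real r * herm2 z x"
  by (simp add: scaleR_csmul)
lemma herm2_suml[simp]: "herm2 (sum f S) z = (\<Sum>i\<in>S. herm2 (f i) z)"
  by (induct S rule: infinite_finite_induct) auto
lemma herm2_sumr[simp]: "herm2 z (sum f S) = (\<Sum>i\<in>S. herm2 z (f i))"
  by (induct S rule: infinite_finite_induct) auto
lemma herm2_cnj: "cnj (herm2 x y) = herm2 y x"
  by (simp add: herm2_def herm_cnj)
lemma herm2_ezero: "herm2 z (ezero x) = herm2 (ezero z) x"
  by (simp add: herm2_def ezero_def add.commute)

lemma herm2_self_real: "Im (herm2 x x) = 0"
  by (simp add: herm2_def herm_def complex_mult_cnj)


lemma mat_m2_mult: "((- 2 * mat 1) :: complex^'m^'m) *v u = (- 2) *s u"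
  proof -
  have "\<And>i. (\<Sum>j\<in>UNIV. - (2 * (if i = j then 1 else 0) * u $ j)) = - (2 * u $ i)"
  proof -
    fix i
    have "(\<Sum>j\<in>UNIV. - (2 * (if i = j then 1 else 0) * u $ j)) = (\<Sum>j\<in>UNIV. if i = j then - (2 * u $ j) else 0)"
      by (rule sum.cong) auto
    then show "(\<Sum>j\<in>UNIV. - (2 * (if i = j then 1 else 0) * u $ j)) = - (2 * u $ i)"
      by simp
  qed
  then show ?thesis
    by (simp add: vec_eq_iff matrix_vector_mult_def mat_def)
qed

lemma clif_anti:
  assumes "clifford_rep c"
  shows "clif c a (clif c b x) + clif c b (clif c a x) = (if a = b then - 2 *\<^sub>R x else 0)"
proof -
  have h: "c a ** c b + c b ** c a = (if a = b then - 2 * mat 1 else 0)"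
    using assms by (simp add: clifford_rep_def)
  have "\<And>u. c a *v (c b *v u) + c b *v (c a *v u) = (if a = b then (- 2) *s u else 0)"
  proof -
    fix u
    have "c a *v (c b *v u) + c b *v (c a *v u) = (c a ** c b + c b ** c a) *v u"
      by (simp add: matrix_vector_mul_assoc matrix_vector_mult_add_rdistrib)
    also have "\<dots> = (if a = b then (- 2) *s u else 0)"
      using h mat_m2_mult by auto
    finally show "c a *v (c b *v u) + c b *v (c a *v u) = (if a = b then (- 2) *s u else 0)" .
  qed
  note u = this
  show ?thesis
    using u[of "fst x"] u[of "snd x"]
    by (auto simp: clif_def prod_eq_iff matrix_vector_mult_diff_distrib[of _ 0, simplified]
        vec_eq_iff scaleR_conv_of_real)
qed


lemma clif_sq:
  assumes "clifford_rep c" shows "clif c a (clif c a x) = - x"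
proof -
  have "2 *\<^sub>R clif c a (clif c a x) = 2 *\<^sub>R (- x)"
    using clif_anti[OF assms, of a a x] by (simp add: scaleR_2)
  then have "2 *\<^sub>R clif c a (clif c a x) = 2 *\<^sub>R (- x)" by simp
  then show ?thesis by (metis scaleR_cancel_left zero_neq_numeral)
qed

lemma herm2_clifr:
  assumes "clifford_rep c" shows "herm2 z (clif c a w) = - herm2 (clif c a z) w"
proof -
  have h: "\<And>u v. herm (c a *v u) v = - herm u (c a *v v)"
    using assms by (simp add: clifford_rep_def)
  show ?thesis
    using h[of "fst z" "fst w"] h[of "snd z" "snd w"]
    by (simp add: herm2_def clif_def herm_minusl herm_minusr)
qed

definition TT :: "('n::finite \<Rightarrow> complex^'m^'m) \<Rightarrow> (complex^'m) \<times> (complex^'m) \<Rightarrow> (complex^'m) \<times> (complex^'m)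
   \<Rightarrow> (complex^'m) \<times> (complex^'m) \<Rightarrow> (complex^'m) \<times> (complex^'m)" where
  "TT c u v z = csmul (herm2 u v) (ezero z)
     + ezero (\<Sum>a\<in>UNIV. csmul (herm2 (clif c a u) v) (clif c a z))
     + (\<Sum>a\<in>UNIV. csmul (herm2 (clif c a (ezero u)) v) (clif c a z))
     - csmul (1/4) (\<Sum>a\<in>UNIV. \<Sum>b\<in>UNIV. csmul (herm2 (clif c a (clif c b (ezero u))) v)
            (clif c a (clif c b z) - clif c b (clif c a z)))"

lemma of_real_Re: "Im z = 0 \<Longrightarrow> complex_of_real (Re z) = z"
  by (simp add: complex_eq_iff)

lemma of_real_Im: "complex_of_real (Im z) = - (\<i>/2) * (z - cnj z)"
  by (simp add: complex_eq_iff)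

lemma phi_eq:
  assumes cr: "clifford_rep c"
  shows "phi_of c x = TT c x x x"
proof -
  note hc = herm2_clifr[OF cr]
  let ?h = "\<lambda>a b. herm2 (clif c a (clif c b (ezero x))) x"
  let ?W = "\<lambda>a b. clif c a (clif c b x)"
  have cnjh: "cnj (?h a b) = ?h b a" for a b
    by (simp add: herm2_cnj hc herm2_ezero)
  have sw: "(\<Sum>a\<in>UNIV. \<Sum>b\<in>UNIV. csmul (?h b a) (?W a b)) = (\<Sum>a\<in>UNIV. \<Sum>b\<in>UNIV. csmul (?h a b) (?W b a))"
    by (rule sum.swap)
  have om: "fact2 c (omegaq c x) x = csmul (- (\<i>/2)) (\<Sum>a\<in>UNIV. \<Sum>b\<in>UNIV. csmul (?h a b) (?W a b - ?W b a))"
  proof -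
    have "fact2 c (omegaq c x) x = (\<Sum>a\<in>UNIV. \<Sum>b\<in>UNIV. csmul (- (\<i>/2) * (?h a b - ?h b a)) (?W a b))"
      unfolding fact2_def omegaq_def by (simp add: scaleR_csmul of_real_Im cnjh)
    also have "\<dots> = csmul (- (\<i>/2)) ((\<Sum>a\<in>UNIV. \<Sum>b\<in>UNIV. csmul (?h a b) (?W a b)) - (\<Sum>a\<in>UNIV. \<Sum>b\<in>UNIV. csmul (?h b a) (?W a b)))"
      by (simp only: right_diff_distrib csmul_diffl sum_subtractf csmul_diff csmul_sum csmul_csmul)
    also have "\<dots> = csmul (- (\<i>/2)) (\<Sum>a\<in>UNIV. \<Sum>b\<in>UNIV. csmul (?h a b) (?W a b - ?W b a))"
      unfolding sw by (simp add: sum_subtractf)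
    finally show ?thesis .
  qed
  have N: "Nq x *\<^sub>R x = csmul (herm2 x x) x"
    by (simp add: Nq_def scaleR_csmul of_real_Re herm2_self_real)
  show ?thesis
    unfolding phi_of_def TT_def om N vact_def Yq_def Xq_def
    by (simp add: csmul_minusl sum_negf)
qed




lemma linear_clif: "linear (clif c a)"
  by (rule linearI) simp_all
lemma linear_ezero: "linear ezero"
  by (rule linearI) simp_all
lemma bilinear_herm2: "bilinear herm2"
  unfolding bilinear_def by (intro conjI allI linearI) (simp_all add: scaleR_conv_of_real)
lemma bilinear_csmul: "bilinear csmul"
  unfolding bilinear_def by (intro conjI allI linearI) (simp_all add: csmul_addl scaleR_csmul scaleR_conv_of_real mult.commute)

lemma bl_clif: "bounded_linear (clif c a)"
  by (rule linear_conv_bounded_linear[THEN iffD1, OF linear_clif])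
lemma bl_ezero: "bounded_linear ezero"
  by (rule linear_conv_bounded_linear[THEN iffD1, OF linear_ezero])
lemma bb_herm2: "bounded_bilinear herm2"
  by (rule bilinear_conv_bounded_bilinear[THEN iffD1, OF bilinear_herm2])
lemma bb_csmul: "bounded_bilinear csmul"
  by (rule bilinear_conv_bounded_bilinear[THEN iffD1, OF bilinear_csmul])

lemma has_derivative_clif[derivative_intros]:
  "(f has_derivative f') F \<Longrightarrow> ((\<lambda>x. clif c a (f x)) has_derivative (\<lambda>h. clif c a (f' h))) F"
  by (rule bounded_linear.has_derivative[OF bl_clif])
lemma has_derivative_ezero[derivative_intros]:
  "(f has_derivative f') F \<Longrightarrow> ((\<lambda>x. ezero (f x)) has_derivative (\<lambda>h. ezero (f' h))) F"
  by (rule bounded_linear.has_derivative[OF bl_ezero])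
lemma has_derivative_herm2[derivative_intros]:
  "(f has_derivative f') (at x within s) \<Longrightarrow> (g has_derivative g') (at x within s) \<Longrightarrow>
   ((\<lambda>x. herm2 (f x) (g x)) has_derivative (\<lambda>h. herm2 (f x) (g' h) + herm2 (f' h) (g x))) (at x within s)"
  by (rule bounded_bilinear.FDERIV[OF bb_herm2])
lemma has_derivative_csmul[derivative_intros]:
  "(f has_derivative f') (at x within s) \<Longrightarrow> (g has_derivative g') (at x within s) \<Longrightarrow>
   ((\<lambda>x. csmul (f x) (g x)) has_derivative (\<lambda>h. csmul (f x) (g' h) + csmul (f' h) (g x))) (at x within s)"
  by (rule bounded_bilinear.FDERIV[OF bb_csmul])

lemma deriv_basic:
  assumes M: "bounded_linear M" and K: "bounded_linear K"
  shows "((\<lambda>x. csmul (herm2 (M x) x) (K x)) has_derivative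
     (\<lambda>h. csmul (herm2 (M h) x) (K x) + csmul (herm2 (M x) h) (K x) + csmul (herm2 (M x) x) (K h))) (at x within s)"
  apply (rule has_derivative_eq_rhs)
   apply (rule has_derivative_csmul)
    apply (rule has_derivative_herm2)
     apply (rule bounded_linear.has_derivative[OF M])
     apply (rule has_derivative_ident)
    apply (rule has_derivative_ident)
   apply (rule bounded_linear.has_derivative[OF K])
   apply (rule has_derivative_ident)
  apply (rule ext)
  apply (simp only: csmul_addl)
  apply (simp only: add_ac)
  done

definition P1 where "P1 u v z = csmul (herm2 u v) (ezero z)"
definition P2 where "P2 c u v z = (\<Sum>a\<in>UNIV. csmul (herm2 (clif c a u) v) (clif c a z))"
definition P3 where "P3 c u v z = (\<Sum>a\<in>UNIV. csmul (herm2 (clif c a (ezero u)) v) (clif c a z))"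
definition P4 where "P4 c u v z = (\<Sum>a\<in>UNIV. \<Sum>b\<in>UNIV. csmul (herm2 (clif c a (clif c b (ezero u))) v)
            (clif c a (clif c b z) - clif c b (clif c a z)))"

lemma TT_P: "TT c u v z = P1 u v z + ezero (P2 c u v z) + P3 c u v z - csmul (1/4) (P4 c u v z)"
  unfolding TT_def P1_def P2_def P3_def P4_def by simp

lemma bl_ops: "bounded_linear (\<lambda>z. clif c a (clif c b z) - clif c b (clif c a z))"
  "bounded_linear (\<lambda>u. clif c a (clif c b (ezero u)))" "bounded_linear (\<lambda>u. clif c a (ezero u))"
  "bounded_linear (\<lambda>u. u)"
  by (intro bounded_linear_sub bounded_linear_compose[OF bl_clif] bounded_linear_compose[OF bl_ezero]
      bl_clif bl_ezero bounded_linear_ident)+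

lemma P1_deriv: "((\<lambda>x. P1 x x x) has_derivative (\<lambda>h. P1 h x x + P1 x h x + P1 x x h)) (at x within s)"
  unfolding P1_def by (rule deriv_basic[OF bl_ops(4) bl_ezero])
lemma P2_deriv: "((\<lambda>x. P2 c x x x) has_derivative (\<lambda>h. P2 c h x x + P2 c x h x + P2 c x x h)) (at x within s)"
  unfolding P2_def
  apply (rule has_derivative_eq_rhs)
   apply (rule has_derivative_sum)
   apply (rule deriv_basic[OF bl_clif bl_clif])
  apply (simp add: sum.distrib)
  done
lemma P3_deriv: "((\<lambda>x. P3 c x x x) has_derivative (\<lambda>h. P3 c h x x + P3 c x h x + P3 c x x h)) (at x within s)"
  unfolding P3_def
  apply (rule has_derivative_eq_rhs)
   apply (rule has_derivative_sum)
   apply (rule deriv_basic[OF bl_ops(3) bl_clif])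
  apply (simp add: sum.distrib)
  done
lemma P4_deriv: "((\<lambda>x. P4 c x x x) has_derivative (\<lambda>h. P4 c h x x + P4 c x h x + P4 c x x h)) (at x within s)"
  unfolding P4_def
  apply (rule has_derivative_eq_rhs)
   apply (rule has_derivative_sum)
   apply (rule has_derivative_sum)
   apply (rule deriv_basic[OF bl_ops(2) bl_ops(1)])
  apply (simp only: sum.distrib)
  done

lemma TT_deriv:
  "((\<lambda>x. TT c x x x) has_derivative (\<lambda>h. TT c h x x + TT c x h x + TT c x x h)) (at x within s)"
  unfolding TT_P
  apply (rule has_derivative_eq_rhs)
   apply (rule has_derivative_diff)
    apply (rule has_derivative_add)
     apply (rule has_derivative_add)
      apply (rule P1_deriv)
     apply (rule has_derivative_ezero)
     apply (rule P2_deriv)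
    apply (rule P3_deriv)
   apply (rule bounded_linear.has_derivative[OF bounded_bilinear.bounded_linear_right[OF bb_csmul]])
   apply (rule P4_deriv)
  apply (rule ext)
  apply (simp only: ezero_add csmul_add csmul_diff)
  apply (simp only: algebra_simps)
  done



lemma cnj_if: "cnj (if P then a else b) = (if P then cnj a else cnj b)" by simp
lemma mult_if1: "(z::complex) * (if P then 1 else 0) = (if P then z else 0)" by simp
lemma sum_mult_out: "(\<Sum>a\<in>S. (z::complex) * g a) = z * sum g S"
  by (simp add: sum_distrib_left)

lemma herm_axis: "herm u (axis k 1) = u $ k"
proof -
  have "herm u (axis k 1) = (\<Sum>a\<in>UNIV. if a = k then u $ a else 0)"
    unfolding herm_def axis_def by (rule sum.cong) auto
  then show ?thesis by simp
qed
lemma herm_zero2: "herm u 0 = 0"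
  by (simp add: herm_def)

lemma herm2_test: "(\<And>y. herm2 u y = herm2 v y) \<Longrightarrow> u = v"
proof -
  assume h: "\<And>y. herm2 u y = herm2 v y"
  have "herm2 u (axis k 1, 0) = fst u $ k" "herm2 u (0, axis k 1) = snd u $ k"
     "herm2 v (axis k 1, 0) = fst v $ k" "herm2 v (0, axis k 1) = snd v $ k" for k
    by (simp_all add: herm2_def herm_axis herm_zero2)
  then show "u = v" using h by (metis prod_eq_iff vec_eq_iff)
qed

lemma sum_csmul_out: "(\<Sum>a\<in>S. csmul z (f a)) = csmul z (sum f S)"
  by simp
lemma sum_csmul_out2: "(\<Sum>a\<in>S. csmul (z * g a) (f a)) = csmul z (\<Sum>a\<in>S. csmul (g a) (f a))"
  by simp

definition JJ where "JJ c j y = csmul \<i> (clif c j y)"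
definition BB where "BB c j y = clif c j (ezero y)"
definition RR where "RR c j k y = clif c j (clif c k y)"

context fixes c :: "'n::finite \<Rightarrow> complex^'m^'m" assumes cr: "clifford_rep c"
begin

lemma JJ_lin[simp]: "JJ c j (x + y) = JJ c j x + JJ c j y" "JJ c j (- x) = - JJ c j x"
  "JJ c j (x - y) = JJ c j x - JJ c j y" "JJ c j 0 = 0" "JJ c j (csmul z x) = csmul z (JJ c j x)"
  "JJ c j (sum f S) = (\<Sum>i\<in>S. JJ c j (f i))"
  by (simp_all add: JJ_def mult.commute)

lemma clif_anti': "clif c a (clif c b x) = - clif c b (clif c a x) + (if a = b then - 2 *\<^sub>R x else 0)"
  using clif_anti[OF cr, of a b x] by (simp add: algebra_simps)

lemma JJ_comm[simp]: "clif c a (JJ c j y) = - JJ c j (clif c a y) + (if a = j then csmul (- 2 * \<i>) y else 0)"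
  unfolding JJ_def using clif_anti'[of a j y] by (simp add: scaleR_csmul csmul_minusl mult.commute)
lemma JJ_ezero[simp]: "ezero (JJ c j y) = - JJ c j (ezero y)"
  unfolding JJ_def by simp
lemma JJ_herm[simp]: "herm2 z (JJ c j w) = herm2 (JJ c j z) w"
  unfolding JJ_def by (simp add: herm2_clifr[OF cr])
lemma JJ_JJ[simp]: "JJ c j (JJ c j y) = y"
  unfolding JJ_def by (simp add: clif_sq[OF cr] csmul_minusl)

lemma if_lemmas:
  "herm2 (if P then u else 0) w = (if P then herm2 u w else 0)"
  "herm2 w (if P then u else 0) = (if P then herm2 w u else 0)"
  "csmul z (if P then u else 0) = (if P then csmul z u else 0)"
  "csmul (if P then z else 0) u = (if P then csmul z u else 0)"
  "clif c a (if P then u else 0) = (if P then clif c a u else 0)"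
  "ezero (if P then u else 0) = (if P then ezero u else 0)"
  "JJ c j (if P then u else 0) = (if P then JJ c j u else 0)"
  "(zz::complex) * (if P then ww else 0) = (if P then zz * ww else 0)"
  "(if P then ww else 0) * (zz::complex) = (if P then ww * zz else 0)"
  "- (if P then (uu::'a::ab_group_add) else 0) = (if P then - uu else 0)"
  "(\<Sum>b\<in>S. if P then ff b else (0::'b::comm_monoid_add)) = (if P then sum ff S else 0)"
  by auto

lemmas norm_simps = herm2_clifr[OF cr] herm2_ezero clif_sq[OF cr] if_lemmas csmul_addl csmul_diffl csmul_minusl sum.delta
   sum.distrib sum_subtractf sum_negf

lemma JJ_j: "clif c j y = - csmul \<i> (JJ c j y)"
  unfolding JJ_def by (simp add: csmul_minusl)

lemma ii: "\<i> * (\<i> * z) = - z"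
  by (simp add: mult.assoc[symmetric])

lemma equiv_J:
  "TT c (JJ c j x) x x + TT c x (JJ c j x) x + TT c x x (JJ c j x) = JJ c j (TT c x x x)"
  unfolding TT_def
  apply (rule herm2_test)
  apply (simp add: norm_simps JJ_j[of j] ii sum_csmul_out sum_csmul_out2 distrib_left distrib_right
     right_diff_distrib left_diff_distrib mult.assoc del: herm2_suml csmul_sum)
  apply (simp add: algebra_simps ii sum_mult_out sum_csmul_out sum_csmul_out2 del: herm2_suml csmul_sum)
  done


lemma BB_lin[simp]: "BB c j (x + y) = BB c j x + BB c j y" "BB c j (- x) = - BB c j x"
  "BB c j (x - y) = BB c j x - BB c j y" "BB c j 0 = 0" "BB c j (csmul z x) = csmul z (BB c j x)"
  "BB c j (sum f S) = (\<Sum>i\<in>S. BB c j (f i))"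
  "BB c j (if P then u else 0) = (if P then BB c j u else 0)"
  by (simp_all add: BB_def)
lemma BB_comm[simp]: "clif c a (BB c j y) = BB c j (clif c a y) + (if a = j then csmul (- 2) (ezero y) else 0)"
  unfolding BB_def using clif_anti'[of a j "ezero y"] by (simp add: scaleR_csmul)
lemma BB_ezero[simp]: "ezero (BB c j y) = - BB c j (ezero y)"
  unfolding BB_def by simp
lemma BB_herm[simp]: "herm2 z (BB c j w) = herm2 (BB c j z) w"
  unfolding BB_def by (simp add: herm2_clifr[OF cr] herm2_ezero)
lemma BB_BB[simp]: "BB c j (BB c j y) = y"
  unfolding BB_def by (simp add: clif_sq[OF cr])
lemma BB_j: "clif c j y = BB c j (ezero y)"
  unfolding BB_def by simp

lemma equiv_B:
  "TT c (BB c j x) x x + TT c x (BB c j x) x + TT c x x (BB c j x) = BB c j (TT c x x x)"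
  unfolding TT_def
  apply (rule herm2_test)
  apply (simp add: norm_simps BB_j[of j] ii sum_csmul_out sum_csmul_out2 distrib_left distrib_right
     right_diff_distrib left_diff_distrib mult.assoc del: herm2_suml csmul_sum)
  apply (simp add: algebra_simps ii sum_mult_out sum_csmul_out sum_csmul_out2 del: herm2_suml csmul_sum)
  done


lemma RR_lin[simp]: "RR c j k (x + y) = RR c j k x + RR c j k y" "RR c j k (- x) = - RR c j k x"
  "RR c j k (x - y) = RR c j k x - RR c j k y" "RR c j k 0 = 0" "RR c j k (csmul z x) = csmul z (RR c j k x)"
  "RR c j k (sum f S) = (\<Sum>i\<in>S. RR c j k (f i))"
  "RR c j k (if P then u else 0) = (if P then RR c j k u else 0)"
  by (simp_all add: RR_def)

lemma csmul_two: "csmul 2 v = v + v"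
  using csmul_addl[of 1 1 v] by simp

lemma RR_comm[simp]: "j \<noteq> k \<Longrightarrow> clif c a (RR c j k y) = RR c j k (clif c a y)
   + (if a = j then csmul (- 2) (clif c k y) else 0) + (if a = k then csmul 2 (clif c j y) else 0)"
  unfolding RR_def
  using clif_anti'[of a j "clif c k y"] clif_anti'[of a k y] clif_anti'[of a j y] clif_anti'[of k j y]
    clif_anti'[of k j "clif c k y"]
  by (auto simp: scaleR_csmul clif_sq[OF cr] algebra_simps csmul_two)
lemma RR_ezero[simp]: "ezero (RR c j k y) = RR c j k (ezero y)"
  unfolding RR_def by simp
lemma RR_herm[simp]: "j \<noteq> k \<Longrightarrow> herm2 z (RR c j k w) = - herm2 (RR c j k z) w"
  unfolding RR_def using clif_anti'[of k j z] by (simp add: herm2_clifr[OF cr])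
lemma RR_fold: "clif c j (clif c k y) = RR c j k y"
  unfolding RR_def by simp
lemma RR_fold2: "j \<noteq> k \<Longrightarrow> clif c k (clif c j y) = - RR c j k y"
  unfolding RR_def using clif_anti'[of k j y] by simp

lemma equiv_R:
  assumes "j \<noteq> k"
  shows "TT c (RR c j k x) x x + TT c x (RR c j k x) x + TT c x x (RR c j k x) = RR c j k (TT c x x x)"
  unfolding TT_def
  apply (rule herm2_test)
  apply (simp add: assms norm_simps RR_fold[of j k] RR_fold2[OF assms] ii sum_csmul_out sum_csmul_out2 distrib_left distrib_right
     right_diff_distrib left_diff_distrib mult.assoc del: herm2_suml csmul_sum)
  apply (simp add: assms algebra_simps ii sum_mult_out sum_csmul_out sum_csmul_out2 del: herm2_suml csmul_sum)
  done

end


lemma lc_diag: "lc_coeff E i j j p = 0"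
  unfolding lc_coeff_def lie_bracket_def frame_coeff_def by simp

lemma equiv_all:
  assumes cr: "clifford_rep c"
  assumes L: "L = (\<lambda>h. TT c h y y + TT c y h y + TT c y y h)"
  shows "L (clif c j (ezero y)) = clif c j (ezero (TT c y y y))"
    and "L (csmul \<i> (clif c j y)) = csmul \<i> (clif c j (TT c y y y))"
    and "j \<noteq> k \<Longrightarrow> L (clif c j (clif c k y)) = clif c j (clif c k (TT c y y y))"
  using equiv_B[OF cr, of j y] equiv_J[OF cr, of j y] equiv_R[OF cr, of j k y]
  unfolding L BB_def JJ_def RR_def by auto

theorem theorem1p6:
  fixes U :: "(real ^ 'n) set"
    and E :: "'n \<Rightarrow> real ^ 'n \<Rightarrow> real ^ 'n"
    and c :: "'n \<Rightarrow> complex ^ 'm ^ 'm"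
    and k :: "'n \<Rightarrow> 'n \<Rightarrow> real ^ 'n \<Rightarrow> real"
    and \<psi> :: "real ^ 'n \<Rightarrow> (complex ^ 'm) \<times> (complex ^ 'm)"
  assumes "open U"
    and "\<forall>i. E i differentiable_on U"
    and "\<forall>p\<in>U. det (\<chi> i. E i p) \<noteq> 0"
    and "\<forall>i j p. k i j p = k j i p"
    and "clifford_rep c"
    and "CARD('m) = 2 ^ (CARD('n) div 2)"
    and "\<psi> differentiable_on U"
    and "\<forall>v. continuous_on U (\<lambda>p. frechet_derivative \<psi> (at p) v)"
    and "\<forall>p\<in>U. killing_eq E c k \<psi> p"
  shows "\<forall>p\<in>U. (\<lambda>q. phi_of c (\<psi> q)) differentiable (at p)
                \<and> killing_eq E c k (\<lambda>q. phi_of c (\<psi> q)) p"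
proof
  fix p assume pU: "p \<in> U"
  note cr = assms(5)
  have phieq: "(\<lambda>q. phi_of c (\<psi> q)) = (\<lambda>q. TT c (\<psi> q) (\<psi> q) (\<psi> q))"
    by (rule ext) (simp add: phi_eq[OF cr])
  have "\<psi> differentiable at p"
    using assms(1,7) pU differentiable_on_eq_differentiable_at by blast
  then have dpsi: "(\<psi> has_derivative frechet_derivative \<psi> (at p)) (at p)"
    using frechet_derivative_works by blast
  define \<psi>' where "\<psi>' = frechet_derivative \<psi> (at p)"
  define y where "y = \<psi> p"
  define L where "L = (\<lambda>h. TT c h y y + TT c y h y + TT c y y h)"
  have dT: "((\<lambda>x. TT c x x x) has_derivative L) (at y)"
    unfolding L_def by (rule TT_deriv)
  have blL: "bounded_linear L" using dT by (rule has_derivative_bounded_linear)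
  interpret L: bounded_linear L by (rule blL)
  have dcomp: "((\<lambda>q. phi_of c (\<psi> q)) has_derivative (L \<circ> \<psi>')) (at p)"
    unfolding phieq using diff_chain_at[OF dpsi dT[unfolded y_def]] unfolding \<psi>'_def
    by (simp add: o_def)
  have diff: "(\<lambda>q. phi_of c (\<psi> q)) differentiable (at p)"
    using dcomp differentiable_def by blast
  have fd: "frechet_derivative (\<lambda>q. phi_of c (\<psi> q)) (at p) = L \<circ> \<psi>'"
    using frechet_derivative_at[OF dcomp] by simp
  have Phi: "phi_of c (\<psi> p) = TT c y y y" unfolding y_def by (simp add: phi_eq[OF cr])
  note eqs = equiv_all[OF cr L_def]
  let ?B = "\<lambda>i w. (\<Sum>j\<in>UNIV. \<Sum>l\<in>UNIV. (lc_coeff E i j l p / 4) *\<^sub>R clif c j (clif c l w))"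
  let ?A = "\<lambda>i w. - (\<Sum>j\<in>UNIV. (k i j p / 2) *\<^sub>R clif c j (ezero w)) - csmul (\<i> / 2) (clif c i w)"
  have LB: "L (?B i y) = ?B i (TT c y y y)" for i
  proof -
    have "L (?B i y) = (\<Sum>j\<in>UNIV. \<Sum>l\<in>UNIV. (lc_coeff E i j l p / 4) *\<^sub>R L (clif c j (clif c l y)))"
      by (simp add: L.sum L.scaleR)
    also have "\<dots> = ?B i (TT c y y y)"
    proof (rule sum.cong[OF refl], rule sum.cong[OF refl])
      fix j l
      show "(lc_coeff E i j l p / 4) *\<^sub>R L (clif c j (clif c l y)) =
            (lc_coeff E i j l p / 4) *\<^sub>R clif c j (clif c l (TT c y y y))"
        by (cases "j = l") (simp_all add: lc_diag eqs(3))
    qed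
    finally show ?thesis .
  qed
  have LA: "L (?A i y) = ?A i (TT c y y y)" for i
  proof -
    have cs: "csmul (\<i> / 2) w = (1/2) *\<^sub>R csmul \<i> w" for w :: "(complex ^ 'm) \<times> (complex ^ 'm)"
      by (simp add: scaleR_csmul)
    show ?thesis
      by (simp add: L.sum L.scaleR L.diff L.neg cs eqs(1,2))
  qed
  have K: "killing_eq E c k \<psi> p" using assms(9) pU by blast
  have Kpsi: "\<psi>' (E i p) = ?A i y - ?B i y" for i
    using K unfolding killing_eq_def spin_nabla_def \<psi>'_def y_def
    by (simp add: algebra_simps)
  have "killing_eq E c k (\<lambda>q. phi_of c (\<psi> q)) p"
    unfolding killing_eq_def spin_nabla_def fd Phi
  proof (intro allI)
    fix i
    have "(L \<circ> \<psi>') (E i p) = ?A i (TT c y y y) - ?B i (TT c y y y)"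
      using Kpsi[of i] LA[of i] LB[of i] L.diff by simp
    then show "(L \<circ> \<psi>') (E i p) + ?B i (TT c y y y) = ?A i (TT c y y y)"
      by simp
  qed
  with diff show "(\<lambda>q. phi_of c (\<psi> q)) differentiable (at p) \<and> killing_eq E c k (\<lambda>q. phi_of c (\<psi> q)) p"
    by blast
qed

end
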